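(* Let $Q_k$ be a $K$-subset system and $(X,\tau)$ a $T_0$ space. Then $X$ is $k$-well-filtered if and only if the map $\lambda:X\to K(X)$, $\lambda(x)=[\{x\}]$, is a homeomorphism.
   Context: $Q(X)$: nonempty compact saturated subsets of $X$; a family is filtered if nonempty and any two members contain a third. A $C$-subset system $Q_k$ assigns to each $T_0$ space $X$ a set $Q_k(X)$ with $\{\uparrow x\mid x\in X\}\subseteq Q_k(X)\subseteq Q(X)$. A nonempty $A\subseteq X$ is $k$-Rudin if for some filtered $\mathcal K\subseteq Q_k(X)$, $\overline A$ is a minimal closed set meeting every member of $\mathcal K$; $\mathrm{K}^R(X)$ is the set of $k$-Rudin sets. $Q_k$ is a $K$-subset system if for all $T_0$ spaces $X,Y$, continuous $f:X\to Y$ and $A\in\mathrm K^R(X)$, $f(A)\in\mathrm K^R(Y)$. $X$ is $k$-well-filtered if for every open $U$ and filtered $\mathcal K\subseteq Q_k(X)$, $\bigcap\mathcal K\subseteq U$ implies $K\subseteq U$ for some $K\in\mathcal K$. On $\mathrm K^R(X)$ put $A\sim B$ iff $\overline A=\overline B$; $K(X)$ is the set of classes $[A]$, topologized by the open sets $U^*=\{[A]\mid A\cap U\ne\emptyset\}$, $U\in\tau$. *)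

theory Defs
  imports "HOL-Analysis.Analysis"
begin

text \<open>Upper set of a point in the specialization order: y is above x iff x is in the closure of y.\<close>
definition upset :: "'a topology \<Rightarrow> 'a \<Rightarrow> 'a set" where
  "upset X x = {y \<in> topspace X. x \<in> X closure_of {y}}"

definition saturated :: "'a topology \<Rightarrow> 'a set \<Rightarrow> bool" where
  "saturated X K \<longleftrightarrow> K \<subseteq> topspace X \<and> K = \<Inter>{U. openin X U \<and> K \<subseteq> U} \<inter> topspace X"

definition Qset :: "'a topology \<Rightarrow> 'a set set" where
  "Qset X = {K. K \<noteq> {} \<and> compactin X K \<and> saturated X K}"

definition filtered :: "'a set set \<Rightarrow> bool" where
  "filtered F \<longleftrightarrow> F \<noteq> {} \<and> (\<forall>A\<in>F. \<forall>B\<in>F. \<exists>C\<in>F. C \<subseteq> A \<inter> B)"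

text \<open>A C-subset system on the T0 spaces carried by the type 'a.\<close>
definition C_subset_system :: "('a topology \<Rightarrow> 'a set set) \<Rightarrow> bool" where
  "C_subset_system Qk \<longleftrightarrow>
     (\<forall>X. t0_space X \<longrightarrow> {upset X x | x. x \<in> topspace X} \<subseteq> Qk X \<and> Qk X \<subseteq> Qset X)"

definition KR :: "('a topology \<Rightarrow> 'a set set) \<Rightarrow> 'a topology \<Rightarrow> 'a set set" where
  "KR Qk X = {A. A \<subseteq> topspace X \<and> A \<noteq> {} \<and>
     (\<exists>\<K>. \<K> \<subseteq> Qk X \<and> filtered \<K> \<and>
        (\<forall>K\<in>\<K>. X closure_of A \<inter> K \<noteq> {}) \<and>
        (\<forall>B. closedin X B \<and> B \<subseteq> X closure_of A \<and> (\<forall>K\<in>\<K>. B \<inter> K \<noteq> {})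
             \<longrightarrow> B = X closure_of A))}"

definition K_subset_system :: "('a topology \<Rightarrow> 'a set set) \<Rightarrow> bool" where
  "K_subset_system Qk \<longleftrightarrow> C_subset_system Qk \<and>
     (\<forall>X Y f A. t0_space X \<and> t0_space Y \<and> continuous_map X Y f \<and> A \<in> KR Qk X
        \<longrightarrow> f ` A \<in> KR Qk Y)"

definition k_well_filtered :: "('a topology \<Rightarrow> 'a set set) \<Rightarrow> 'a topology \<Rightarrow> bool" where
  "k_well_filtered Qk X \<longleftrightarrow>
     (\<forall>U \<K>. openin X U \<and> \<K> \<subseteq> Qk X \<and> filtered \<K> \<and> \<Inter>\<K> \<subseteq> U \<longrightarrow> (\<exists>K\<in>\<K>. K \<subseteq> U))"

definition Kclass :: "('a topology \<Rightarrow> 'a set set) \<Rightarrow> 'a topology \<Rightarrow> 'a set \<Rightarrow> 'a set set" where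
  "Kclass Qk X A = {B \<in> KR Qk X. X closure_of B = X closure_of A}"

definition Kpoints :: "('a topology \<Rightarrow> 'a set set) \<Rightarrow> 'a topology \<Rightarrow> 'a set set set" where
  "Kpoints Qk X = Kclass Qk X ` KR Qk X"

definition Kstar :: "('a topology \<Rightarrow> 'a set set) \<Rightarrow> 'a topology \<Rightarrow> 'a set \<Rightarrow> 'a set set set" where
  "Kstar Qk X U = {Kclass Qk X A | A. A \<in> KR Qk X \<and> A \<inter> U \<noteq> {}}"

definition Ktop :: "('a topology \<Rightarrow> 'a set set) \<Rightarrow> 'a topology \<Rightarrow> 'a set set topology" where
  "Ktop Qk X = topology_generated_by {Kstar Qk X U | U. openin X U}"

definition Klambda :: "('a topology \<Rightarrow> 'a set set) \<Rightarrow> 'a topology \<Rightarrow> 'a \<Rightarrow> 'a set set" where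
  "Klambda Qk X x = Kclass Qk X {x}"

end

theory Submission imports Defs begin
lemma finite_chain_min:
  assumes "finite F" "F \<noteq> {}" "\<forall>A\<in>F. \<forall>B\<in>F. A \<subseteq> B \<or> B \<subseteq> A"
  shows "\<exists>m\<in>F. \<forall>x\<in>F. m \<subseteq> x"
  using assms
proof (induction F rule: finite_ne_induct)
  case (singleton x) then show ?case by auto
next
  case (insert x F)
  then obtain m where m: "m \<in> F" "\<forall>y\<in>F. m \<subseteq> y" by auto
  have "x \<subseteq> m \<or> m \<subseteq> x" using insert.prems m by auto
  then show ?case
  proof
    assume "x \<subseteq> m" then have "\<forall>a\<in>insert x F. x \<subseteq> a" using m by auto
    then show ?case by blast
  next
    assume "m \<subseteq> x" then have "\<forall>a\<in>insert x F. m \<subseteq> a" using m by auto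
    then show ?case using m(1) by blast
  qed
qed

lemma chain_Inter_meets:
  assumes K: "compactin X K" and ne: "Cs \<noteq> {}"
    and cl: "\<forall>C\<in>Cs. closedin X C \<and> C \<inter> K \<noteq> {}"
    and ch: "\<forall>A\<in>Cs. \<forall>B\<in>Cs. A \<subseteq> B \<or> B \<subseteq> A"
  shows "K \<inter> \<Inter>Cs \<noteq> {}"
proof -
  have "K \<noteq> {}" using ne cl by auto
  have fin: "\<forall>F. finite F \<and> F \<subseteq> Cs \<longrightarrow> K \<inter> \<Inter>F \<noteq> {}"
  proof (intro allI impI)
    fix F assume FF: "finite F \<and> F \<subseteq> Cs"
    show "K \<inter> \<Inter>F \<noteq> {}"
    proof (cases "F = {}")
      case True then show ?thesis using \<open>K \<noteq> {}\<close> by simp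
    next
      case False
      have chF: "\<forall>A\<in>F. \<forall>B\<in>F. A \<subseteq> B \<or> B \<subseteq> A" using ch FF by blast
      obtain m where m: "m \<in> F" "\<forall>x\<in>F. m \<subseteq> x"
        using finite_chain_min[OF _ False chF] FF by blast
      then have "m \<subseteq> \<Inter>F" by auto
      moreover have "m \<inter> K \<noteq> {}" using cl m FF by auto
      ultimately show ?thesis by blast
    qed
  qed
  have clC: "\<forall>C\<in>Cs. closedin X C" using cl by blast
  have "\<forall>\<U>. (\<forall>C\<in>\<U>. closedin X C) \<and> (\<forall>\<F>. finite \<F> \<and> \<F> \<subseteq> \<U> \<longrightarrow> K \<inter> \<Inter>\<F> \<noteq> {}) \<longrightarrow> K \<inter> \<Inter>\<U> \<noteq> {}"
    using K unfolding compactin_fip by blast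
  then show ?thesis using clC fin by blast
qed
theorem lemma4:
  fixes Qk :: "'a topology \<Rightarrow> 'a set set" and X :: "'a topology"
  assumes "K_subset_system Qk"
    and "t0_space X"
  shows "k_well_filtered Qk X \<longleftrightarrow> homeomorphic_map X (Ktop Qk X) (Klambda Qk X)"
proof -
  let ?T = "topspace X"
  have CS: "C_subset_system Qk" using assms(1) unfolding K_subset_system_def by blast
  have up: "\<And>x. x \<in> ?T \<Longrightarrow> upset X x \<in> Qk X" and QQ: "Qk X \<subseteq> Qset X"
    using CS assms(2) unfolding C_subset_system_def by blast+
  have Qprops: "K \<noteq> {} \<and> compactin X K \<and> saturated X K" if "K \<in> Qk X" for K
    using QQ that unfolding Qset_def by blast
  have satup: "y \<in> K" if "K \<in> Qk X" "x \<in> K" "y \<in> ?T" "x \<in> X closure_of {y}" for K x y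
  proof -
    have sat: "K = \<Inter>{U. openin X U \<and> K \<subseteq> U} \<inter> ?T"
      using Qprops[OF that(1)] unfolding saturated_def by blast
    have "y \<in> U" if "openin X U" "K \<subseteq> U" for U
    proof -
      have "x \<in> U" using that \<open>x \<in> K\<close> by blast
      then have "U \<inter> X closure_of {y} \<noteq> {}" using \<open>x \<in> X closure_of {y}\<close> by blast
      then have "U \<inter> {y} \<noteq> {}" using openin_Int_closure_of_eq_empty[OF that(1)] by blast
      then show ?thesis by blast
    qed
    then show ?thesis using sat \<open>y \<in> ?T\<close> by blast
  qed
  have krsing: "{x} \<in> KR Qk X" if x: "x \<in> ?T" for x
  proof -
    have xin: "x \<in> upset X x" unfolding upset_def using x closure_of_subset[of "{x}" X] by auto
    have "X closure_of {x} \<inter> upset X x \<noteq> {}" using xin closure_of_subset[of "{x}" X] x by auto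
    moreover have "B = X closure_of {x}" if BB: "closedin X B" "B \<subseteq> X closure_of {x}" "B \<inter> upset X x \<noteq> {}" for B
    proof -
      obtain y where y: "y \<in> B" "x \<in> X closure_of {y}" using BB(3) unfolding upset_def by auto
      have "X closure_of {y} \<subseteq> B" using y BB(1) by (simp add: closure_of_minimal)
      then have "x \<in> B" using y by blast
      then have "X closure_of {x} \<subseteq> B" using BB(1) by (simp add: closure_of_minimal)
      then show ?thesis using BB(2) by blast
    qed
    ultimately show ?thesis unfolding KR_def filtered_def using x up[OF x]
      by (intro CollectI conjI exI[of _ "{upset X x}"]) auto
  qed
  have KRsub: "A \<subseteq> ?T" "A \<noteq> {}" if "A \<in> KR Qk X" for A using that unfolding KR_def by auto
  have classeq: "Kclass Qk X A = Kclass Qk X B \<longleftrightarrow> X closure_of A = X closure_of B"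
    if "A \<in> KR Qk X" "B \<in> KR Qk X" for A B
    using that unfolding Kclass_def by blast
  have meet: "A \<inter> U \<noteq> {} \<longleftrightarrow> X closure_of A \<inter> U \<noteq> {}" if "openin X U" for A U
    using openin_Int_closure_of_eq_empty[OF that, of A] by blast
  define surj where "surj \<longleftrightarrow> (\<forall>A\<in>KR Qk X. \<exists>x\<in>?T. X closure_of A = X closure_of {x})"
  have topK: "topspace (Ktop Qk X) = Kpoints Qk X"
  proof
    show "topspace (Ktop Qk X) \<subseteq> Kpoints Qk X"
      unfolding Ktop_def topology_generated_by_topspace Kstar_def Kpoints_def by blast
    show "Kpoints Qk X \<subseteq> topspace (Ktop Qk X)"
    proof
      fix P assume "P \<in> Kpoints Qk X"
      then obtain A where A: "A \<in> KR Qk X" "P = Kclass Qk X A" unfolding Kpoints_def by blast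
      have "P \<in> Kstar Qk X ?T" unfolding Kstar_def using A KRsub[OF A(1)] by blast
      then show "P \<in> topspace (Ktop Qk X)"
        unfolding Ktop_def topology_generated_by_topspace by blast
    qed
  qed
  have lamin: "Klambda Qk X x \<in> Kpoints Qk X" if "x \<in> ?T" for x
    unfolding Klambda_def Kpoints_def using krsing[OF that] by blast
  have inj: "inj_on (Klambda Qk X) ?T"
  proof (rule inj_onI)
    fix x y assume xy: "x \<in> ?T" "y \<in> ?T" "Klambda Qk X x = Klambda Qk X y"
    then have "Kclass Qk X {x} = Kclass Qk X {y}" by (simp add: Klambda_def)
    then have "X closure_of {x} = X closure_of {y}"
      using classeq[OF krsing[OF xy(1)] krsing[OF xy(2)]] by simp
    then show "x = y" using assms(2) xy(1,2) unfolding t0_space_closure_of_sing by metis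
  qed
  have pre: "Klambda Qk X x \<in> Kstar Qk X U \<longleftrightarrow> x \<in> U" if "x \<in> ?T" "openin X U" for x U
  proof
    assume "x \<in> U" then show "Klambda Qk X x \<in> Kstar Qk X U"
      unfolding Kstar_def Klambda_def using krsing[OF that(1)] by blast
  next
    assume "Klambda Qk X x \<in> Kstar Qk X U"
    then obtain A where A: "A \<in> KR Qk X" "A \<inter> U \<noteq> {}" "Kclass Qk X {x} = Kclass Qk X A"
      unfolding Kstar_def Klambda_def by blast
    have "X closure_of A = X closure_of {x}" using classeq[OF A(1) krsing[OF that(1)]] A(3) by simp
    then have "X closure_of {x} \<inter> U \<noteq> {}" using meet[OF that(2), of A] A(2) by simp
    then have "{x} \<inter> U \<noteq> {}" using meet[OF that(2), of "{x}"] by blast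
    then show "x \<in> U" by blast
  qed
  have cont: "continuous_map X (Ktop Qk X) (Klambda Qk X)"
    unfolding Ktop_def
  proof (rule continuous_on_generated_topo)
    fix V assume "V \<in> {Kstar Qk X U |U. openin X U}"
    then obtain U where U: "V = Kstar Qk X U" "openin X U" by blast
    have "Klambda Qk X -` V \<inter> ?T = U"
      using pre U openin_subset[OF U(2)] by blast
    then show "openin X (Klambda Qk X -` V \<inter> ?T)" using U by simp
  next
    show "Klambda Qk X ` ?T \<subseteq> \<Union> {Kstar Qk X U |U. openin X U}"
      using lamin topK unfolding Ktop_def topology_generated_by_topspace by blast
  qed
  have hom_iff: "homeomorphic_map X (Ktop Qk X) (Klambda Qk X) \<longleftrightarrow> surj"
  proof
    assume h: "homeomorphic_map X (Ktop Qk X) (Klambda Qk X)"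
    then have img: "Klambda Qk X ` ?T = Kpoints Qk X"
      using topK homeomorphic_eq_everything_map by metis
    show surj unfolding surj_def
    proof
      fix A assume A: "A \<in> KR Qk X"
      then have "Kclass Qk X A \<in> Kpoints Qk X" unfolding Kpoints_def by blast
      then obtain x where x: "x \<in> ?T" "Kclass Qk X A = Kclass Qk X {x}"
        using img unfolding Klambda_def by auto
      then show "\<exists>x\<in>?T. X closure_of A = X closure_of {x}"
        using classeq[OF A krsing[OF x(1)]] by blast
    qed
  next
    assume s: surj
    have img: "Klambda Qk X ` U = Kstar Qk X U" if U: "openin X U" for U
    proof
      show "Klambda Qk X ` U \<subseteq> Kstar Qk X U"
        using pre[OF _ U] openin_subset[OF U] by blast
      show "Kstar Qk X U \<subseteq> Klambda Qk X ` U"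
      proof
        fix P assume "P \<in> Kstar Qk X U"
        then obtain A where A: "P = Kclass Qk X A" "A \<in> KR Qk X" "A \<inter> U \<noteq> {}"
          unfolding Kstar_def by blast
        obtain x where x: "x \<in> ?T" "X closure_of A = X closure_of {x}"
          using s A(2) unfolding surj_def by blast
        have P: "P = Klambda Qk X x"
          using classeq[OF A(2) krsing[OF x(1)]] x A(1) unfolding Klambda_def by simp
        have "P \<in> Kstar Qk X U" unfolding Kstar_def using A by blast
        then have "x \<in> U" using pre[OF x(1) U] P by simp
        then show "P \<in> Klambda Qk X ` U" using P by blast
      qed
    qed
    have om: "open_map X (Ktop Qk X) (Klambda Qk X)"
      unfolding open_map_def
    proof (intro allI impI)
      fix U assume U: "openin X U"
      show "openin (Ktop Qk X) (Klambda Qk X ` U)" unfolding img[OF U] Ktop_def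
        by (rule topology_generated_by_Basis) (use U in blast)
    qed
    have KsT: "Kstar Qk X ?T = Kpoints Qk X"
    proof
      show "Kstar Qk X ?T \<subseteq> Kpoints Qk X" unfolding Kstar_def Kpoints_def by blast
      show "Kpoints Qk X \<subseteq> Kstar Qk X ?T"
      proof
        fix P assume "P \<in> Kpoints Qk X"
        then obtain A where A: "A \<in> KR Qk X" "P = Kclass Qk X A" unfolding Kpoints_def by blast
        have "A \<inter> ?T \<noteq> {}" using KRsub[OF A(1)] by blast
        then show "P \<in> Kstar Qk X ?T" unfolding Kstar_def using A by blast
      qed
    qed
    have "Klambda Qk X ` ?T = topspace (Ktop Qk X)"
      using img[OF openin_topspace] topK KsT by simp
    then show "homeomorphic_map X (Ktop Qk X) (Klambda Qk X)"
      by (rule bijective_open_imp_homeomorphic_map[OF cont om _ inj])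
  qed
  have kwf_iff: "k_well_filtered Qk X \<longleftrightarrow> surj"
  proof
    assume kwf: "k_well_filtered Qk X"
    show surj unfolding surj_def
    proof
      fix A assume A: "A \<in> KR Qk X"
      then obtain \<K> where K: "\<K> \<subseteq> Qk X" "filtered \<K>" "\<forall>K\<in>\<K>. X closure_of A \<inter> K \<noteq> {}"
        "\<forall>B. closedin X B \<and> B \<subseteq> X closure_of A \<and> (\<forall>K\<in>\<K>. B \<inter> K \<noteq> {}) \<longrightarrow> B = X closure_of A"
        unfolding KR_def by blast
      have "X closure_of A \<inter> \<Inter>\<K> \<noteq> {}"
      proof
        assume e: "X closure_of A \<inter> \<Inter>\<K> = {}"
        have "\<K> \<noteq> {}" using K(2) unfolding filtered_def by blast
        then obtain K0 where "K0 \<in> \<K>" by blast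
        have "K0 \<subseteq> ?T" using Qprops K(1) \<open>K0 \<in> \<K>\<close> unfolding saturated_def by blast
        then have "\<Inter>\<K> \<subseteq> ?T - X closure_of A" using e \<open>K0 \<in> \<K>\<close> by blast
        moreover have "openin X (?T - X closure_of A)" by (simp add: openin_diff)
        ultimately obtain K where "K \<in> \<K>" "K \<subseteq> ?T - X closure_of A"
          using kwf K(1,2) unfolding k_well_filtered_def by blast
        then show False using K(3) by blast
      qed
      then obtain x where x: "x \<in> X closure_of A" "x \<in> \<Inter>\<K>" by blast
      have xT: "x \<in> ?T" using x(1) closure_of_subset_topspace[of X A] by blast
      have c1: "closedin X (X closure_of {x})" by simp
      have c2: "X closure_of {x} \<subseteq> X closure_of A"
        using x(1) by (simp add: closure_of_minimal)
      have c3: "\<forall>K\<in>\<K>. X closure_of {x} \<inter> K \<noteq> {}"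
        using x(2) closure_of_subset[of "{x}" X] xT by blast
      have "X closure_of {x} = X closure_of A"
        using K(4) c1 c2 c3 by blast
      then show "\<exists>x\<in>?T. X closure_of A = X closure_of {x}" using xT by metis
    qed
  next
    assume s: surj
    show "k_well_filtered Qk X" unfolding k_well_filtered_def
    proof (intro allI impI)
      fix U \<K> assume H: "openin X U \<and> \<K> \<subseteq> Qk X \<and> filtered \<K> \<and> \<Inter>\<K> \<subseteq> U"
      show "\<exists>K\<in>\<K>. K \<subseteq> U"
      proof (rule ccontr)
        assume nk: "\<not> (\<exists>K\<in>\<K>. K \<subseteq> U)"
        have KT: "K \<subseteq> ?T" if "K \<in> \<K>" for K using Qprops H that unfolding saturated_def by blast
        define Aset where "Aset = {C. closedin X C \<and> C \<subseteq> ?T - U \<and> (\<forall>K\<in>\<K>. C \<inter> K \<noteq> {})}"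
        have T0: "?T - U \<in> Aset" unfolding Aset_def using H nk KT by blast
        define D where "D = (\<lambda>C. ?T - C) ` Aset"
        have "\<exists>M\<in>D. \<forall>Y\<in>D. M \<subseteq> Y \<longrightarrow> Y = M"
        proof (rule subset_Zorn)
          fix Ch assume ch: "subset.chain D Ch"
          show "\<exists>V\<in>D. \<forall>Y\<in>Ch. Y \<subseteq> V"
          proof (cases "Ch = {}")
            case True then show ?thesis using T0 unfolding D_def by blast
          next
            case False
            define Cs where "Cs = (\<lambda>c. ?T - c) ` Ch"
            have ChD: "Ch \<subseteq> D" using ch unfolding subset.chain_def by blast
            have ChT: "c \<subseteq> ?T" if "c \<in> Ch" for c using ChD that unfolding D_def by blast
            have CsA: "Cs \<subseteq> Aset" unfolding Cs_def
            proof
              fix z assume "z \<in> (\<lambda>c. ?T - c) ` Ch"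
              then obtain c where c: "c \<in> Ch" "z = ?T - c" by blast
              then obtain C where C: "C \<in> Aset" "c = ?T - C" using ChD unfolding D_def by blast
              have "C \<subseteq> ?T" using C(1) unfolding Aset_def using closedin_subset by blast
              then have "z = C" using c C by blast
              then show "z \<in> Aset" using C by simp
            qed
            have Csne: "Cs \<noteq> {}" using False unfolding Cs_def by blast
            have Csch: "\<forall>A\<in>Cs. \<forall>B\<in>Cs. A \<subseteq> B \<or> B \<subseteq> A"
              using ch unfolding Cs_def subset.chain_def by blast
            have IA: "\<Inter>Cs \<in> Aset"
              unfolding Aset_def
            proof (intro CollectI conjI ballI)
              show "closedin X (\<Inter>Cs)" using CsA Csne unfolding Aset_def by (intro closedin_Inter) auto
              show "\<Inter>Cs \<subseteq> ?T - U" using CsA Csne unfolding Aset_def by blast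
              fix K assume K: "K \<in> \<K>"
              have "compactin X K" using Qprops H K by blast
              then have "K \<inter> \<Inter>Cs \<noteq> {}"
                using chain_Inter_meets[OF _ Csne _ Csch] CsA K unfolding Aset_def by blast
              then show "\<Inter>Cs \<inter> K \<noteq> {}" by blast
            qed
            have "?T - \<Inter>Cs \<in> D" using IA unfolding D_def by blast
            moreover have "\<forall>Y\<in>Ch. Y \<subseteq> ?T - \<Inter>Cs" using ChT unfolding Cs_def by blast
            ultimately show ?thesis by blast
          qed
        qed
        then obtain M where M: "M \<in> D" "\<forall>Y\<in>D. M \<subseteq> Y \<longrightarrow> Y = M" by blast
        then obtain C where C: "C \<in> Aset" "M = ?T - C" unfolding D_def by blast
        have CT: "C \<subseteq> ?T" using C(1) unfolding Aset_def using closedin_subset by blast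
        have Cmin: "B = C" if "closedin X B" "B \<subseteq> C" "\<forall>K\<in>\<K>. B \<inter> K \<noteq> {}" for B
        proof -
          have "B \<in> Aset" using that C(1) unfolding Aset_def by blast
          then have "?T - B \<in> D" unfolding D_def by blast
          moreover have "M \<subseteq> ?T - B" using C that(2) by blast
          ultimately have "?T - B = ?T - C" using M C by blast
          then show ?thesis using CT that(2) by blast
        qed
        have Cc: "closedin X C" and CK: "\<forall>K\<in>\<K>. C \<inter> K \<noteq> {}" and CU: "C \<subseteq> ?T - U"
          using C(1) unfolding Aset_def by blast+
        have Ccl: "X closure_of C = C" using Cc by (simp add: closure_of_closedin)
        have "\<K> \<noteq> {}" using H unfolding filtered_def by blast
        then have Cne: "C \<noteq> {}" using CK by blast
        have KH: "\<K> \<subseteq> Qk X" "filtered \<K>" using H by blast+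
        have Cmin': "\<forall>B. closedin X B \<and> B \<subseteq> X closure_of C \<and> (\<forall>K\<in>\<K>. B \<inter> K \<noteq> {})
             \<longrightarrow> B = X closure_of C" using Cmin unfolding Ccl by blast
        have CKc: "\<forall>K\<in>\<K>. X closure_of C \<inter> K \<noteq> {}" using CK unfolding Ccl .
        have "C \<in> KR Qk X" unfolding KR_def
          using CT Cne KH CKc Cmin' by blast
        then obtain x where x: "x \<in> ?T" "X closure_of C = X closure_of {x}" using s unfolding surj_def by blast
        have x2: "C = X closure_of {x}" using x(2) Ccl by simp
        have "x \<in> \<Inter>\<K>"
        proof
          fix K assume K: "K \<in> \<K>"
          then obtain y where "y \<in> K" "y \<in> X closure_of {x}" using CK x2 by blast
          moreover have "K \<in> Qk X" using KH K by blast
          ultimately show "x \<in> K" using satup[of K y x] x(1) by blast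
        qed
        moreover have "x \<in> C" using x2 x(1) closure_of_subset[of "{x}" X] by blast
        moreover have "\<Inter>\<K> \<subseteq> U" using H by blast
        ultimately show False using CU by blast
      qed
    qed
  qed
  show ?thesis using hom_iff kwf_iff by simp
qed

end
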